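(* Fix $\xi\in[0,0.13]$ and let $y_i\in[\cos(2\pi/9),1)$ for all $i\in\{2,3,5,6\}$. Then for any $j\in\{2,3,5,6\}$ with $y_j\ge\max\{y_{j'},\cos(2\pi/10)\}$, one has $\frac{\partial\psi_\xi}{\partial y_j}(\delta,y_2,y_3,y_5,y_6)\ge0$ for all $\delta\in[0,0.13]$.
   Context: Pairing: $2'=6$, $3'=5$, $5'=3$, $6'=2$. For $\xi\ge0$, $y\in(0,1)$: $\eta_\xi(y)=\frac{-2-5y+(1+\xi)^2+\sqrt{(2+5y-(1+\xi)^2)^2+4(2+y)(1-y)(1+\xi)^2}}{2+y}$ (the positive root of $(2+y)\delta^2+2(2+5y-(1+\xi)^2)\delta-4(1-y)(1+\xi)^2$). Let $b(y)=\frac{16}{y+1}-7$, $c_n=\cos(2\pi/n)$, $\beta(y)=b(y)$ on $[c_{10},1]$ and $\beta(y)=\frac{(2-b(c_{10}))b(y)-(2-b(c_9))b(c_{10})}{b(c_9)-b(c_{10})}$ on $[c_9,c_{10}]$. Define $$G(\delta,\eta_2,\eta_3,\eta_5,\eta_6,\beta_2,\beta_3,\beta_5,\beta_6)=\frac{1+\dfrac{\delta[(1+\eta_2)(1+\eta_5)+(1+\eta_3)(1+\eta_6)]-2\delta(\delta+2)}{(2+\eta_2+\eta_6)(2+\eta_3+\eta_5)}}{\sqrt{1+\dfrac{\delta^2+2(1+\beta_2\beta_6)\delta}{(2+\eta_2+\eta_6)^2}}\sqrt{1+\dfrac{\delta^2+2(1+\beta_3\beta_5)\delta}{(2+\eta_3+\eta_5)^2}}}$$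 and $\psi_\xi(\delta,y_2,y_3,y_5,y_6)=G(\delta,\eta_\xi(y_2),\eta_\xi(y_3),\eta_\xi(y_5),\eta_\xi(y_6),\beta(y_2),\beta(y_3),\beta(y_5),\beta(y_6))$. *)

theory Defs
  imports "HOL-Analysis.Analysis"
begin

definition pairing :: "nat \<Rightarrow> nat" where
  "pairing i = (if i = 2 then 6 else if i = 3 then 5 else if i = 5 then 3 else if i = 6 then 2 else i)"

definition eta :: "real \<Rightarrow> real \<Rightarrow> real" where
  "eta \<xi> y = (-2 - 5*y + (1+\<xi>)^2
      + sqrt ((2 + 5*y - (1+\<xi>)^2)^2 + 4*(2+y)*(1-y)*(1+\<xi>)^2)) / (2 + y)"

definition bfun :: "real \<Rightarrow> real" where
  "bfun y = 16 / (y + 1) - 7"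

definition cc :: "real \<Rightarrow> real" where
  "cc n = cos (2 * pi / n)"

text \<open>beta: equal to b on [c10,1], the affine-in-b interpolation on [c9,c10]
  (only values on [c9,1] are ever used).\<close>
definition beta :: "real \<Rightarrow> real" where
  "beta y = (if cc 10 \<le> y then bfun y
     else ((2 - bfun (cc 10)) * bfun y - (2 - bfun (cc 9)) * bfun (cc 10))
          / (bfun (cc 9) - bfun (cc 10)))"

definition G :: "real \<Rightarrow> real \<Rightarrow> real \<Rightarrow> real \<Rightarrow> real \<Rightarrow> real \<Rightarrow> real \<Rightarrow> real \<Rightarrow> real \<Rightarrow> real" where
  "G \<delta> \<eta>2 \<eta>3 \<eta>5 \<eta>6 \<beta>2 \<beta>3 \<beta>5 \<beta>6 =
     (1 + (\<delta> * ((1+\<eta>2)*(1+\<eta>5) + (1+\<eta>3)*(1+\<eta>6)) - 2*\<delta>*(\<delta>+2))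
            / ((2+\<eta>2+\<eta>6) * (2+\<eta>3+\<eta>5)))
     / (sqrt (1 + (\<delta>^2 + 2*(1+\<beta>2*\<beta>6)*\<delta>) / (2+\<eta>2+\<eta>6)^2)
        * sqrt (1 + (\<delta>^2 + 2*(1+\<beta>3*\<beta>5)*\<delta>) / (2+\<eta>3+\<eta>5)^2))"

definition psi :: "real \<Rightarrow> real \<Rightarrow> real \<Rightarrow> real \<Rightarrow> real \<Rightarrow> real \<Rightarrow> real" where
  "psi \<xi> \<delta> y2 y3 y5 y6 =
     G \<delta> (eta \<xi> y2) (eta \<xi> y3) (eta \<xi> y5) (eta \<xi> y6)
       (beta y2) (beta y3) (beta y5) (beta y6)"

definition psi_v :: "real \<Rightarrow> real \<Rightarrow> (nat \<Rightarrow> real) \<Rightarrow> real" where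
  "psi_v \<xi> \<delta> y = psi \<xi> \<delta> (y 2) (y 3) (y 5) (y 6)"

end

theory Submission imports Defs begin


lemma pi_ub: "pi \<le> 3161/1000"
proof -
  have "arctan (1/7) \<le> (1/7::real)" by (rule arctan_le_self) simp
  moreover have "arctan (3/79) \<le> (3/79::real)" by (rule arctan_le_self) simp
  ultimately show ?thesis using machin_Euler by linarith
qed

lemma cos_lb: assumes "0 \<le> x" shows "1 - x^2/2 \<le> cos (x::real)"
proof -
  have c: "cos x = 1 - 2 * (sin (x/2))^2"
    using cos_double_sin[of "x/2"] by simp
  have "\<bar>sin (x/2)\<bar> \<le> \<bar>x/2\<bar>" by (rule abs_sin_x_le_abs_x)
  hence "(sin (x/2))^2 \<le> (x/2)^2"
    by (metis abs_le_square_iff)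
  thus ?thesis using c by (simp add: power_divide)
qed

lemma cc10_lb: "0.8 \<le> cc 10"
proof -
  have "1 - (2*pi/10)^2/2 \<le> cc 10" unfolding cc_def by (rule cos_lb) simp
  moreover have "(2*pi/10)^2 \<le> (2*(3161/1000)/10)^2"
    using pi_ub by (intro power_mono) auto
  ultimately show ?thesis by (simp add: power2_eq_square)
qed

lemma cc9_lb: "0.75 \<le> cc 9"
proof -
  have "1 - (2*pi/9)^2/2 \<le> cc 9" unfolding cc_def by (rule cos_lb) simp
  moreover have "(2*pi/9)^2 \<le> (2*(3161/1000)/9)^2"
    using pi_ub by (intro power_mono) auto
  ultimately show ?thesis by (simp add: power2_eq_square)
qed

lemma cc9_lt: "cc 9 < cc 10"
  unfolding cc_def using pi_gt_zero
  by (subst cos_mono_less_eq) (auto simp: field_simps)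

lemma cc10_le1: "cc 10 \<le> 1" unfolding cc_def by simp

lemma cc10_lt1: "cc 10 < 1"
proof -
  have "cos (2*pi/10) < cos 0" using pi_gt_zero
    by (subst cos_mono_less_eq) (auto simp: field_simps)
  thus ?thesis unfolding cc_def by simp
qed



lemma eta_deriv:
  fixes \<xi> t w R :: real
  assumes w_def: "w = (1+\<xi>)^2"
    and R_def: "R = sqrt ((2 + 5*t - w)^2 + 4*(2+t)*(1-t)*w)"
    and c: "0 < 2 + 5*t - w" "t < 1" "0 < 2 + t"
  shows "(eta \<xi> has_real_derivative
     (- (((eta \<xi> t)^2 + 10*eta \<xi> t + 4*w)/(2*R)))) (at t)"
proof -
  define D where "D = (\<lambda>x::real. (2 + 5*x - w)^2 + 4*(2+x)*(1-x)*w)"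
  have w0: "0 \<le> w" using w_def by simp
  have Dp: "0 < D t"
    unfolding D_def using c w0 by (intro add_pos_nonneg) auto
  have Rp: "0 < R" using Dp R_def D_def by simp
  have RR: "R^2 = D t" using Dp R_def D_def by simp
  have ef: "eta \<xi> = (\<lambda>x. (-2 - 5*x + w + sqrt (D x))/(2+x))"
    unfolding eta_def D_def w_def by auto
  have et: "eta \<xi> t = (-2 - 5*t + w + R)/(2+t)" unfolding ef R_def D_def by simp
  have dD: "(D has_real_derivative (10*(2+5*t-w) - 4*w*(1+2*t))) (at t)"
    unfolding D_def by (auto intro!: derivative_eq_intros simp: algebra_simps)
  have dS: "((\<lambda>x. sqrt (D x)) has_real_derivative ((10*(2+5*t-w) - 4*w*(1+2*t)) / (2*R))) (at t)"
  proof -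
    have "(sqrt has_real_derivative inverse (sqrt (D t)) / 2) (at (D t))"
      by (rule DERIV_real_sqrt[OF Dp])
    from DERIV_chain2[OF this dD] show ?thesis
      using R_def D_def by (simp add: field_simps)
  qed
  have dN: "((\<lambda>x. -2 - 5*x + w + sqrt (D x)) has_real_derivative (-5 + (10*(2+5*t-w) - 4*w*(1+2*t)) / (2*R))) (at t)"
  proof -
    have d1: "((\<lambda>x. -2 - 5*x + w) has_real_derivative -5) (at t)"
      by (auto intro!: derivative_eq_intros)
    from DERIV_add[OF d1 dS] show ?thesis by simp
  qed
  have dQ: "((\<lambda>x. (-2 - 5*x + w + sqrt (D x))/(2+x)) has_real_derivative
      (((-5 + (10*(2+5*t-w) - 4*w*(1+2*t)) / (2*R)) * (2+t) - (-2 - 5*t + w + R)) / (2+t)^2)) (at t)"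
    using DERIV_divide[OF dN DERIV_add[OF DERIV_const[of 2] DERIV_ident]] c R_def D_def
    by (simp add: power2_eq_square)
  define E where "E = (-2 - 5*t + w + R)/(2+t)"
  define D' where "D' = 10*(2+5*t-w) - 4*w*(1+2*t)"
  have hE: "E*(2+t) = R - (2+5*t-w)" unfolding E_def using c(3) by (simp add: field_simps)
  have RR': "R^2 = (2 + 5*t - w)^2 + 4*(2+t)*(1-t)*w" using RR D_def by simp
  have key: "(2+t) * (-10*R - 2*R*E + D' + (2+t)*E^2 + 10*(2+t)*E + 4*w*(2+t)) = 0"
    using hE RR' unfolding D'_def by algebra
  hence key2: "-10*R - 2*R*E + D' + (2+t)*E^2 + 10*(2+t)*E + 4*w*(2+t) = 0"
    using c(3) by simp
  have eq: "(((-5 + D' / (2*R)) * (2+t) - E*(2+t)) / (2+t)^2)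
     = - ((E^2 + 10*E + 4*w)/(2*R))"
  proof -
    have D'eq: "D' = 10*R + 2*R*E - (2+t)*(E^2 + 10*E + 4*w)" using key2 by (simp add: algebra_simps)
    have a: "-5 + D' / (2*R) - E = - ((2+t)*(E^2 + 10*E + 4*w)) / (2*R)"
      unfolding D'eq using Rp by (simp add: field_simps)
    have "(((-5 + D' / (2*R)) * (2+t) - E*(2+t)) / (2+t)^2) = (-5 + D' / (2*R) - E) / (2+t)"
    proof -
      have "((-5 + D' / (2*R)) * (2+t) - E*(2+t)) = (-5 + D' / (2*R) - E) * (2+t)"
        by (simp add: algebra_simps)
      thus ?thesis using c(3) by (simp add: power2_eq_square)
    qed
    also have "\<dots> = - ((E^2 + 10*E + 4*w)/(2*R))" unfolding a using c(3) by simp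
    finally show ?thesis .
  qed
  have "-2 - 5*t + w + R = E*(2+t)" using hE by simp
  have x: "-2 - 5*t + w + R = R - (2+5*t-w)" by simp
  have etE: "eta \<xi> t = E" unfolding et E_def ..
  have "(eta \<xi> has_real_derivative - ((E^2+10*E+4*w)/(2*R))) (at t)"
    using dQ eq unfolding ef[symmetric] E_def[symmetric] D'_def[symmetric] x hE by simp
  thus ?thesis unfolding etE .
qed


lemma eta_basic:
  fixes \<xi> y w :: real
  assumes w: "w = (1+\<xi>)^2" and "0 \<le> \<xi>" "\<xi> \<le> 13/100" "3/4 \<le> y" "y \<le> 1"
  shows "1 \<le> w" "w \<le> 12769/10000" "0 \<le> eta \<xi> y"
    "sqrt ((2 + 5*y - w)^2 + 4*(2+y)*(1-y)*w) = (2+y)*eta \<xi> y + (2 + 5*y - w)"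
    "(2+y)*(eta \<xi> y)^2 + 2*(2+5*y-w)*eta \<xi> y - 4*(1-y)*w = 0"
proof -
  have "1 \<le> 1 + \<xi>" using assms by simp
  hence "1^2 \<le> (1+\<xi>)^2" by (rule power_mono) simp
  thus w1: "1 \<le> w" using w by simp
  have "(1+\<xi>)^2 \<le> (113/100)^2" using assms by (intro power_mono) auto
  thus w2: "w \<le> 12769/10000" using w by (simp add: power2_eq_square)
  define c where "c = 2 + 5*y - w"
  define R where "R = sqrt ((2 + 5*y - w)^2 + 4*(2+y)*(1-y)*w)"
  have cp: "0 < c" unfolding c_def using w2 assms by simp
  have nn: "0 \<le> 4*(2+y)*(1-y)*w" using assms w1 by simp
  have RR: "R^2 = c^2 + 4*(2+y)*(1-y)*w" unfolding R_def c_def using nn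
    by (simp add: add_nonneg_nonneg)
  have "sqrt (c^2) \<le> R" unfolding R_def c_def using nn by (intro real_sqrt_le_mono) simp
  hence Rc: "c \<le> R" using cp by simp
  have e: "eta \<xi> y = (R - c)/(2+y)" unfolding eta_def R_def c_def w by (simp add: algebra_simps)
  show "0 \<le> eta \<xi> y" unfolding e using Rc assms by simp
  have e2: "(2+y) * eta \<xi> y = R - c" unfolding e using assms by simp
  show "R = (2+y)*eta \<xi> y + (2 + 5*y - w)" using e2 c_def by simp
  have "(2+y) * ((2+y)*(eta \<xi> y)^2 + 2*c*eta \<xi> y - 4*(1-y)*w) = 0"
    using e2 RR by algebra
  thus "(2+y)*(eta \<xi> y)^2 + 2*(2+5*y-w)*eta \<xi> y - 4*(1-y)*w = 0"
    using assms c_def by simp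
qed

lemma quad_le:
  fixes a b k e h :: real
  assumes "0 < a" "0 < b" "a*e^2 + 2*b*e - k = 0" "0 \<le> e" "0 \<le> h" "0 \<le> a*h^2 + 2*b*h - k"
  shows "e \<le> h"
proof (rule ccontr)
  assume "\<not> e \<le> h"
  hence "0 < e - h" by simp
  moreover have "0 < a*(e+h) + 2*b" using assms by (simp add: add_pos_nonneg) (smt (verit) mult_nonneg_nonneg)
  ultimately have "0 < (e - h)*(a*(e+h) + 2*b)" by simp
  moreover have "(e - h)*(a*(e+h) + 2*b) = (a*e^2 + 2*b*e - k) - (a*h^2 + 2*b*h - k)"
    by (simp add: algebra_simps power2_eq_square)
  ultimately show False using assms by linarith
qed

lemma eta_ub:
  fixes \<xi> y :: real
  assumes "0 \<le> \<xi>" "\<xi> \<le> 13/100" "3/4 \<le> y" "y \<le> 1"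
  shows "eta \<xi> y \<le> 14/100" "4/5 \<le> y \<Longrightarrow> eta \<xi> y \<le> 106/1000"
proof -
  define w where "w = (1+\<xi>)^2"
  note B = eta_basic[OF w_def assms]
  have p1: "(1-y)*w \<le> (1-y)*(12769/10000)" using B(2) assms by (intro mult_left_mono) auto
  show "eta \<xi> y \<le> 14/100"
  proof (rule quad_le[OF _ _ B(5) B(3)])
    show "0 < 2+y" using assms by simp
    show "0 < 2+5*y-w" using assms B(2) by simp
    have eq: "(2+y)*(14/100)^2 + 2*(2+5*y-w)*(14/100) - 4*(1-y)*w = (2+y)*(196/10000) + 2*(2+5*y-w)*(14/100) - 4*((1-y)*w)"
      by (simp add: power2_eq_square)
    show "0 \<le> (2+y)*(14/100)^2 + 2*(2+5*y-w)*(14/100) - 4*(1-y)*w" unfolding eq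
      using p1 assms B(2) by (simp add: field_simps)
  qed simp
  assume y8: "4/5 \<le> y"
  show "eta \<xi> y \<le> 106/1000"
  proof (rule quad_le[OF _ _ B(5) B(3)])
    show "0 < 2+y" using assms by simp
    show "0 < 2+5*y-w" using assms B(2) by simp
    have eq: "(2+y)*(106/1000)^2 + 2*(2+5*y-w)*(106/1000) - 4*(1-y)*w = (2+y)*(11236/1000000) + 2*(2+5*y-w)*(106/1000) - 4*((1-y)*w)"
      by (simp add: power2_eq_square)
    show "0 \<le> (2+y)*(106/1000)^2 + 2*(2+5*y-w)*(106/1000) - 4*(1-y)*w" unfolding eq
      using p1 y8 B(2) by (simp add: field_simps)
  qed simp
qed


lemma sign_core:
  fixes \<delta> e ep ec ed bt bp u vb :: real
  assumes d: "0 \<le> \<delta>" "\<delta> \<le> 13/100"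
    and e: "0 \<le> e" "e \<le> 106/1000"
    and ep: "0 \<le> ep" "ep \<le> 14/100" and ec: "0 \<le> ec" "ec \<le> 14/100" and ed: "0 \<le> ed" "ed \<le> 14/100"
    and bt: "1 \<le> bt" "bt \<le> 17/9" "bt \<le> bp"
    and u: "0 \<le> u" "u \<le> 655/1000" and vb: "4 \<le> vb"
  shows "0 \<le> bp * vb * ((2+e+ep)*(2+ec+ed) + \<delta>*((1+e)*(1+ec) + (1+ed)*(1+ep)) - 2*\<delta>*(\<delta>+2))
     - u * ((2+e+ep)*(1+ep)*(ec-ed) + 2*(\<delta>+2)*(2+e+ep) + (2+ec+ed+\<delta>*(1+ec))*(\<delta>+2+2*bt*bp))"
proof -
  define A where "A = 2+e+ep"
  define B where "B = 2+ec+ed"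
  define K where "K = 2+ec+ed+\<delta>*(1+ec)"
  define N where "N = A*B + \<delta>*((1+e)*(1+ec) + (1+ed)*(1+ep)) - 2*\<delta>*(\<delta>+2)"
  define X where "X = A*(1+ep)*(ec-ed) + 2*(\<delta>+2)*A + K*(\<delta>+2+2*bt*bp)"
  have A: "2 \<le> A" "A \<le> 2246/1000" unfolding A_def using e ep by auto
  have B: "2 \<le> B" unfolding B_def using ec ed by auto
  have K: "0 \<le> K" "K \<le> 24282/10000" proof -
    have "\<delta>*(1+ec) \<le> (13/100)*(114/100)" using d ec by (intro mult_mono) auto
    thus "K \<le> 24282/10000" unfolding K_def using ec ed by simp
    show "0 \<le> K" unfolding K_def using d ec ed by simp
  qed
  have AB: "4 \<le> A*B" using mult_mono[OF A(1) B] A(1) by simp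
  have dd: "\<delta>*(\<delta>+2) \<le> (13/100)*(213/100)" using d by (intro mult_mono) auto
  have dp: "0 \<le> \<delta>*((1+e)*(1+ec) + (1+ed)*(1+ep))" using d e ec ed ep by simp
  have N: "34462/10000 \<le> N" unfolding N_def using AB dd dp by simp
  have bp: "1 \<le> bp" using bt by simp
  have x1: "A*(1+ep)*(ec-ed) \<le> (2246/1000)*(114/100)*(14/100)"
  proof -
    have "A*(1+ep) \<le> (2246/1000)*(114/100)" using A ep by (intro mult_mono) auto
    moreover have "ec - ed \<le> 14/100" using ec ed by simp
    ultimately have "A*(1+ep)*(ec-ed) \<le> A*(1+ep)*(14/100)" using A ep
      by (intro mult_left_mono) auto
    also have "\<dots> \<le> (2246/1000)*(114/100)*(14/100)" using \<open>A*(1+ep) \<le> _\<close> by simp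
    finally show ?thesis .
  qed
  have x2: "2*(\<delta>+2)*A \<le> 2*(213/100)*(2246/1000)"
  proof -
    have "(\<delta>+2)*A \<le> (213/100)*(2246/1000)" using A d by (intro mult_mono) auto
    moreover have "2*(\<delta>+2)*A = 2*((\<delta>+2)*A)" by simp
    ultimately show ?thesis by linarith
  qed
  have x3: "K*(\<delta>+2+2*bt*bp) \<le> (24282/10000)*(213/100) + 2*(24282/10000)*(bt*bp)"
  proof -
    have btp: "0 \<le> bt*bp" using bt bp by simp
    have "K*(\<delta>+2+2*bt*bp) \<le> (24282/10000)*(\<delta>+2+2*bt*bp)" using K d btp
      by (intro mult_right_mono) auto
    thus ?thesis using d K by (simp add: algebra_simps)
  qed
  define Xm where "Xm = (2246/1000)*(114/100)*(14/100) + 2*(213/100)*(2246/1000) + (24282/10000)*(213/100) + 2*(24282/10000)*(bt*bp)"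
  have XX: "X \<le> Xm" unfolding X_def Xm_def using x1 x2 x3 by linarith
  have Xm0: "0 \<le> Xm" unfolding Xm_def using bt bp by simp
  have "u*X \<le> u*Xm" using XX u by (intro mult_left_mono) auto
  also have "\<dots> \<le> (655/1000)*Xm" using u Xm0 by (intro mult_right_mono) auto
  finally have uX: "u*X \<le> (655/1000)*Xm" .
  have vN: "4*(34462/10000) \<le> vb *N" using mult_mono[OF vb N] vb by simp
  have "bp*(4*(34462/10000)) \<le> bp*(vb *N)" using vN bp by (intro mult_left_mono) auto
  hence bvN: "bp*(4*(34462/10000)) \<le> bp* vb *N" by (simp add: mult.assoc)
  define c where "c = 137848/10000 - (655/1000)*2*(24282/10000)*bt"
  have c0: "0 \<le> c" unfolding c_def using bt by simp
  have h1: "bt*c \<le> bp*c" using bt c0 by (intro mult_right_mono) auto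
  have "(bt-1)*(17/9-bt) \<ge> 0" using bt by simp
  moreover have "(bt-1)*(17/9-bt) = (26*bt - 17)/9 - bt*bt" by (simp add: field_simps)
  ultimately have h2: "bt*bt \<le> (26*bt - 17)/9" by linarith
  define k1 :: real where "k1 = (655/1000)*2*(24282/10000)"
  define k0 :: real where "k0 = (655/1000)*((2246/1000)*(114/100)*(14/100) + 2*(213/100)*(2246/1000) + (24282/10000)*(213/100))"
  have k0: "k0 \<le> 9891/1000" unfolding k0_def by simp
  have k1: "k1 = 3180942/1000000" unfolding k1_def by simp
  obtain P where P: "P = bt*bp" by simp
  obtain Q where Q: "Q = bt*bt" by simp
  have e1: "bt*c = 137848/10000*bt - k1*Q" unfolding c_def k1_def Q by (simp add: algebra_simps)
  have e2: "bp*c = 137848/10000*bp - k1*P" unfolding c_def k1_def P by (simp add: algebra_simps)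
  have e3: "(655/1000)*Xm = k0 + k1*P" unfolding Xm_def k0_def k1_def P by (simp add: algebra_simps)
  have h1': "137848/10000*bt - k1*Q \<le> 137848/10000*bp - k1*P" using h1 e1 e2 by simp
  have h2': "Q \<le> (26*bt - 17)/9" using h2 Q by simp
  have "k1*Q \<le> k1*((26*bt - 17)/9)" using h2' k1 by (intro mult_left_mono) auto
  hence "(655/1000)*Xm \<le> bp*(4*(34462/10000))"
    using h1' e3 k0 k1 bt by simp
  hence "u*X \<le> bp* vb *N" using uX bvN by linarith
  thus ?thesis unfolding N_def X_def A_def B_def K_def by simp
qed


lemma F_deriv:
  fixes e b :: "real \<Rightarrow> real" and t e' b' \<delta> ep ec ed bp K :: real
  assumes de: "(e has_real_derivative e') (at t)" and db: "(b has_real_derivative b') (at t)"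
    and Dp: "0 < (2 + e t + ep)^2 + \<delta>^2 + 2*(1 + b t * bp)*\<delta>"
  shows "((\<lambda>x. ((2 + e x + ep)*(2+ec+ed) + \<delta>*((1 + e x)*(1+ec) + (1+ed)*(1+ep)) - 2*\<delta>*(\<delta>+2))
            / (sqrt ((2 + e x + ep)^2 + \<delta>^2 + 2*(1 + b x * bp)*\<delta>) * K)) has_real_derivative
      ((e'*((2+ec+ed) + \<delta>*(1+ec))) * (sqrt ((2 + e t + ep)^2 + \<delta>^2 + 2*(1 + b t * bp)*\<delta>) * K)
        - ((2 + e t + ep)*(2+ec+ed) + \<delta>*((1 + e t)*(1+ec) + (1+ed)*(1+ep)) - 2*\<delta>*(\<delta>+2))
          * ((2*(2 + e t + ep)*e' + 2*\<delta>*bp*b') / (2 * sqrt ((2 + e t + ep)^2 + \<delta>^2 + 2*(1 + b t * bp)*\<delta>)) * K))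
      / (sqrt ((2 + e t + ep)^2 + \<delta>^2 + 2*(1 + b t * bp)*\<delta>) * K)^2) (at t)"
proof -
  define Den where "Den = (\<lambda>x. (2 + e x + ep)^2 + \<delta>^2 + 2*(1 + b x * bp)*\<delta>)"
  define N where "N = (\<lambda>x. (2 + e x + ep)*(2+ec+ed) + \<delta>*((1 + e x)*(1+ec) + (1+ed)*(1+ep)) - 2*\<delta>*(\<delta>+2))"
  have dN: "(N has_real_derivative (e'*((2+ec+ed) + \<delta>*(1+ec)))) (at t)"
    unfolding N_def by (auto intro!: derivative_eq_intros de simp: algebra_simps)
  have dDen: "(Den has_real_derivative (2*(2 + e t + ep)*e' + 2*\<delta>*bp*b')) (at t)"
    unfolding Den_def by (auto intro!: derivative_eq_intros de db simp: algebra_simps)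
  have Dp': "0 < Den t" using Dp Den_def by simp
  have dS: "((\<lambda>x. sqrt (Den x)) has_real_derivative (2*(2 + e t + ep)*e' + 2*\<delta>*bp*b') / (2 * sqrt (Den t))) (at t)"
  proof -
    have "(sqrt has_real_derivative inverse (sqrt (Den t)) / 2) (at (Den t))"
      by (rule DERIV_real_sqrt[OF Dp'])
    from DERIV_chain2[OF this dDen] show ?thesis by (simp add: field_simps)
  qed
  have dSK: "((\<lambda>x. sqrt (Den x) * K) has_real_derivative (2*(2 + e t + ep)*e' + 2*\<delta>*bp*b') / (2 * sqrt (Den t)) * K) (at t)"
    using DERIV_mult[OF dS DERIV_const[of K]] by simp
  have nz: "sqrt (Den t) * K \<noteq> 0 \<or> K = 0" using Dp' by simp
  show ?thesis
  proof (cases "K = 0")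
    case True
    then show ?thesis by simp
  next
    case False
    hence "sqrt (Den t) * K \<noteq> 0" using Dp' by simp
    from DERIV_divide[OF dN dSK this] show ?thesis unfolding N_def Den_def by (simp add: power2_eq_square)
  qed
qed

lemma bfun_props:
  fixes t :: real assumes "4/5 \<le> t" "t < 1"
  shows "1 \<le> bfun t" "bfun t \<le> 17/9"
    "(bfun has_real_derivative (- (16/(t+1)^2))) (at t)"
    "4 \<le> 16/(t+1)^2"
proof -
  have "16/2 \<le> 16/(t+1)" using assms by (intro divide_left_mono) auto
  thus "1 \<le> bfun t" unfolding bfun_def by simp
  have "16/(t+1) \<le> 16/(9/5)" using assms by (intro divide_left_mono) auto
  thus "bfun t \<le> 17/9" unfolding bfun_def by simp
  show "(bfun has_real_derivative (- (16/(t+1)^2))) (at t)"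
    unfolding bfun_def[abs_def] using assms
    by (auto intro!: derivative_eq_intros simp: power2_eq_square)
  have "(t+1)^2 \<le> 2^2" using assms by (intro power_mono) auto
  hence "16/2^2 \<le> 16/(t+1)^2" using assms by (intro divide_left_mono) auto
  thus "4 \<le> 16/(t+1)^2" by simp
qed

lemma bfun_anti: "-1 < x \<Longrightarrow> x \<le> y \<Longrightarrow> bfun y \<le> bfun x"
  unfolding bfun_def by (simp add: divide_left_mono)

lemma beta_lb:
  assumes "cc 9 \<le> y" "y < 1"
  shows "bfun (cc 10) \<le> beta y \<or> cc 10 \<le> y"
proof (cases "cc 10 \<le> y")
  case True thus ?thesis by simp
next
  case False
  define b9 where "b9 = bfun (cc 9)"
  define b10 where "b10 = bfun (cc 10)"
  define by' where "by' = bfun y"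
  have "bfun (cc 10) < bfun (cc 9)" unfolding bfun_def using cc9_lt cc9_lb
    by (simp add: divide_strict_left_mono)
  hence h1: "b10 < b9" by (simp add: b9_def b10_def)
  have h2: "b10 \<le> by'" unfolding b10_def by'_def using False assms cc9_lb by (intro bfun_anti) auto
  have h3: "b10 \<le> 17/9" unfolding b10_def using bfun_props(2)[of "cc 10"] cc10_lb cc10_lt1 by simp
  have "b10 * (b9 - b10) \<le> (2 - b10) * by' - (2 - b9) * b10"
  proof -
    have "0 \<le> (2 - b10)*(by' - b10)" using h2 h3 by simp
    thus ?thesis by (simp add: algebra_simps)
  qed
  hence "b10 \<le> ((2 - b10) * by' - (2 - b9) * b10) / (b9 - b10)" using h1 by (simp add: pos_le_divide_eq)
  thus ?thesis using False unfolding beta_def b9_def b10_def by'_def by simp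
qed

lemma beta_ge1: assumes "cc 9 \<le> y" "y < 1" shows "1 \<le> beta y"
proof -
  have "1 \<le> bfun (cc 10)" using bfun_props(1)[of "cc 10"] cc10_lb cc10_lt1 by simp
  moreover have "cc 10 \<le> y \<Longrightarrow> 1 \<le> beta y" unfolding beta_def using bfun_props(1)[of y] cc10_lb assms by simp
  ultimately show ?thesis using beta_lb[OF assms] by linarith
qed

lemma beta_mono: assumes "cc 9 \<le> y" "y \<le> t" "cc 10 \<le> t" "t < 1" shows "bfun t \<le> beta y"
proof (cases "cc 10 \<le> y")
  case True
  then show ?thesis unfolding beta_def using bfun_anti[of y t] assms cc10_lb by simp
next
  case False
  hence "bfun (cc 10) \<le> beta y" using beta_lb[of y] assms by linarith
  moreover have "bfun t \<le> bfun (cc 10)" using bfun_anti[of "cc 10" t] assms cc10_lb by simp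
  ultimately show ?thesis by linarith
qed

definition Gs :: "real \<Rightarrow> real \<Rightarrow> real \<Rightarrow> real \<Rightarrow> real \<Rightarrow> real \<Rightarrow> real \<Rightarrow> real \<Rightarrow> real \<Rightarrow> real" where
  "Gs \<delta> et ep ec ed bt bp bc bd =
     (1 + (\<delta> * ((1+et)*(1+ec) + (1+ed)*(1+ep)) - 2*\<delta>*(\<delta>+2)) / ((2+et+ep)*(2+ec+ed)))
     / (sqrt (1 + (\<delta>^2 + 2*(1+bt*bp)*\<delta>) / (2+et+ep)^2)
        * sqrt (1 + (\<delta>^2 + 2*(1+bc*bd)*\<delta>) / (2+ec+ed)^2))"

lemma sqrt_aux: assumes "0 < a" "0 \<le> q" shows "sqrt (1 + q / a^2) = sqrt (a^2 + q) / a"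
proof -
  have "1 + q/a^2 = (a^2 + q)/a^2" using assms by (simp add: field_simps)
  thus ?thesis using assms by (simp add: real_sqrt_divide)
qed

lemma Gs_simp:
  assumes "0 < 2+et+ep" "0 < 2+ec+ed" "0 \<le> \<delta>^2 + 2*(1+bt*bp)*\<delta>" "0 \<le> \<delta>^2 + 2*(1+bc*bd)*\<delta>"
  shows "Gs \<delta> et ep ec ed bt bp bc bd =
    ((2+et+ep)*(2+ec+ed) + \<delta>*((1+et)*(1+ec) + (1+ed)*(1+ep)) - 2*\<delta>*(\<delta>+2))
      / (sqrt ((2+et+ep)^2 + (\<delta>^2 + 2*(1+bt*bp)*\<delta>)) * sqrt ((2+ec+ed)^2 + (\<delta>^2 + 2*(1+bc*bd)*\<delta>)))"
proof -
  have p1: "0 < sqrt ((2+et+ep)^2 + (\<delta>^2 + 2*(1+bt*bp)*\<delta>))" using assms by (intro real_sqrt_gt_zero add_pos_nonneg) auto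
  have p2: "0 < sqrt ((2+ec+ed)^2 + (\<delta>^2 + 2*(1+bc*bd)*\<delta>))" using assms by (intro real_sqrt_gt_zero add_pos_nonneg) auto
  have gen: "\<And>A B qa qb X::real. 0 < A \<Longrightarrow> 0 < B \<Longrightarrow> 0 < qa \<Longrightarrow> 0 < qb \<Longrightarrow>
     (1 + X/(A*B)) / (qa/A * (qb/B)) = (A*B + X)/(qa*qb)" by (simp add: field_simps)
  show ?thesis unfolding Gs_def sqrt_aux[OF assms(1,3)] sqrt_aux[OF assms(2,4)]
    by (simp only: gen[OF assms(1,2) p1 p2] add_diff_eq)
qed

lemma G_Gs:
  "G \<delta> e2 e3 e5 e6 b2 b3 b5 b6 = Gs \<delta> e2 e6 e5 e3 b2 b6 b5 b3"
  "G \<delta> e2 e3 e5 e6 b2 b3 b5 b6 = Gs \<delta> e6 e2 e3 e5 b6 b2 b3 b5"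
  "G \<delta> e2 e3 e5 e6 b2 b3 b5 b6 = Gs \<delta> e3 e5 e6 e2 b3 b5 b6 b2"
  "G \<delta> e2 e3 e5 e6 b2 b3 b5 b6 = Gs \<delta> e5 e3 e2 e6 b5 b3 b2 b6"
  unfolding G_def Gs_def by (simp_all add: ac_simps)

lemma Dsign:
  fixes r K Np N Den Dn :: real
  assumes "0 < r" "r^2 = Den" "0 < K" "0 \<le> Np*Den - N*Dn/2"
  shows "0 \<le> (Np*(r*K) - N*(Dn/(2*r)*K))/(r*K)^2"
proof -
  have "Np*(r*K) - N*(Dn/(2*r)*K) = (K/r)*(Np*r^2 - N*Dn/2)"
    using assms(1) by (simp add: field_simps power2_eq_square)
  also have "\<dots> \<ge> 0" using assms by simp
  finally show ?thesis by simp
qed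

lemma Zid:
  fixes \<delta> e ep ec ed bt bp E Bp :: real
  shows "E*((2+ec+ed) + \<delta>*(1+ec)) * ((2+e+ep)^2 + \<delta>^2 + 2*(1+bt*bp)*\<delta>)
     - ((2+e+ep)*(2+ec+ed) + \<delta>*((1+e)*(1+ec) + (1+ed)*(1+ep)) - 2*\<delta>*(\<delta>+2))
       * ((2+e+ep)*E + \<delta>*bp*Bp)
   = \<delta> * (bp * (-Bp) * ((2+e+ep)*(2+ec+ed) + \<delta>*((1+e)*(1+ec) + (1+ed)*(1+ep)) - 2*\<delta>*(\<delta>+2))
     - (-E) * ((2+e+ep)*(1+ep)*(ec-ed) + 2*(\<delta>+2)*(2+e+ep) + (2+ec+ed+\<delta>*(1+ec))*(\<delta>+2+2*bt*bp)))"
  by (simp add: algebra_simps power2_eq_square)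


lemma core:
  fixes \<xi> \<delta> yt yp yc yd :: real
  assumes xi: "0 \<le> \<xi>" "\<xi> \<le> 13/100" and dl: "0 \<le> \<delta>" "\<delta> \<le> 13/100"
    and yt: "cc 10 \<le> yt" "yt < 1" and yp: "cc 9 \<le> yp" "yp \<le> yt"
    and yc: "cc 9 \<le> yc" "yc < 1" and yd: "cc 9 \<le> yd" "yd < 1"
  shows "\<exists>D. ((\<lambda>x. Gs \<delta> (eta \<xi> x) (eta \<xi> yp) (eta \<xi> yc) (eta \<xi> yd) (beta x) (beta yp) (beta yc) (beta yd))
            has_real_derivative D) (at yt within {cc 10..<1}) \<and> 0 \<le> D"
proof -
  define w where "w = (1+\<xi>)^2"
  define ep where "ep = eta \<xi> yp"
  define ec where "ec = eta \<xi> yc"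
  define ed where "ed = eta \<xi> yd"
  define bp where "bp = beta yp"
  define bc where "bc = beta yc"
  define bd where "bd = beta yd"
  have c10: "4/5 \<le> cc 10" using cc10_lb by simp
  have c9: "3/4 \<le> cc 9" using cc9_lb by simp
  have ypl: "yp < 1" using yp yt by simp
  have ep: "0 \<le> ep" "ep \<le> 14/100" unfolding ep_def
    using eta_basic(3)[OF refl xi, of yp] eta_ub(1)[OF xi, of yp] yp ypl c9 by auto
  have ec: "0 \<le> ec" "ec \<le> 14/100" unfolding ec_def
    using eta_basic(3)[OF refl xi, of yc] eta_ub(1)[OF xi, of yc] yc c9 by auto
  have ed: "0 \<le> ed" "ed \<le> 14/100" unfolding ed_def
    using eta_basic(3)[OF refl xi, of yd] eta_ub(1)[OF xi, of yd] yd c9 by auto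
  have bp: "bfun yt \<le> bp" unfolding bp_def using beta_mono[of yp yt] yp yt by simp
  have bc: "1 \<le> bc" unfolding bc_def using beta_ge1 yc by simp
  have bd: "1 \<le> bd" unfolding bd_def using beta_ge1 yd by simp
  have bt: "1 \<le> bfun yt" "bfun yt \<le> 17/9" using bfun_props(1,2)[of yt] yt c10 by auto
  have bp1: "1 \<le> bp" using bp bt by simp
  define K where "K = sqrt ((2+ec+ed)^2 + (\<delta>^2 + 2*(1+bc*bd)*\<delta>))"
  have Q2: "0 \<le> \<delta>^2 + 2*(1+bc*bd)*\<delta>" using dl bc bd by simp
  have Kp: "0 < K" unfolding K_def using ec ed Q2 by (intro real_sqrt_gt_zero add_pos_nonneg) auto
  define F where "F = (\<lambda>x. ((2 + eta \<xi> x + ep)*(2+ec+ed) + \<delta>*((1 + eta \<xi> x)*(1+ec) + (1+ed)*(1+ep)) - 2*\<delta>*(\<delta>+2))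
            / (sqrt ((2 + eta \<xi> x + ep)^2 + \<delta>^2 + 2*(1 + bfun x * bp)*\<delta>) * K))"
  have eqF: "Gs \<delta> (eta \<xi> x) ep ec ed (beta x) bp bc bd = F x" if x: "x \<in> {cc 10..<1}" for x
  proof -
    have bx: "beta x = bfun x" using x unfolding beta_def by simp
    have b1: "1 \<le> bfun x" using bfun_props(1)[of x] x c10 by simp
    have e0: "0 \<le> eta \<xi> x" using eta_basic(3)[OF refl xi, of x] x c10 by simp
    have Q1: "0 \<le> \<delta>^2 + 2*(1+bfun x*bp)*\<delta>" using dl b1 bp1 by simp
    show ?thesis unfolding bx F_def K_def
      by (subst Gs_simp) (use e0 ep ec ed Q1 Q2 in \<open>simp_all add: add.assoc\<close>)
  qed
  define e where "e = eta \<xi> yt"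
  define R where "R = sqrt ((2 + 5*yt - w)^2 + 4*(2+yt)*(1-yt)*w)"
  define e' where "e' = - ((e^2 + 10*e + 4*w)/(2*R))"
  define b' where "b' = - (16/(yt+1)^2)"
  have EB: "1 \<le> w" "w \<le> 12769/10000" "0 \<le> e" "R = (2+yt)*e + (2 + 5*yt - w)"
    using eta_basic(1-4)[OF w_def xi, of yt] yt c10 unfolding e_def R_def by auto
  have e106: "e \<le> 106/1000" using eta_ub(2)[OF xi, of yt] yt c10 unfolding e_def by simp
  have "0 \<le> (2+yt)*e" using EB yt c10 by simp
  hence Rlb: "47231/10000 \<le> R" using EB yt c10 by linarith
  have de: "(eta \<xi> has_real_derivative e') (at yt)"
    unfolding e'_def e_def using eta_deriv[OF w_def R_def] EB yt c10 by simp
  have db: "(bfun has_real_derivative b') (at yt)" unfolding b'_def using bfun_props(3)[of yt] yt c10 by simp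
  have Den0: "0 < (2 + eta \<xi> yt + ep)^2 + \<delta>^2 + 2*(1 + bfun yt * bp)*\<delta>"
    using EB ep dl bt bp1 unfolding e_def by (intro add_pos_nonneg) auto
  note FD = F_deriv[OF de db Den0, of ec ed K]
  define r where "r = sqrt ((2 + eta \<xi> yt + ep)^2 + \<delta>^2 + 2*(1 + bfun yt * bp)*\<delta>)"
  define Np where "Np = e' * ((2+ec+ed) + \<delta>*(1+ec))"
  define N where "N = (2 + e + ep)*(2+ec+ed) + \<delta>*((1 + e)*(1+ec) + (1+ed)*(1+ep)) - 2*\<delta>*(\<delta>+2)"
  define Dn where "Dn = 2*(2 + e + ep)*e' + 2*\<delta>*bp*b'"
  define Den where "Den = (2 + e + ep)^2 + \<delta>^2 + 2*(1 + bfun yt * bp)*\<delta>"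
  have FD': "(F has_real_derivative (Np * (r * K) - N * (Dn / (2 * r) * K)) / (r * K)^2) (at yt)"
    using FD unfolding F_def r_def Np_def N_def Dn_def e_def by simp
  have rp: "0 < r" unfolding r_def using Den0 by simp
  have rr: "r^2 = Den" unfolding r_def Den_def e_def using Den0 by simp
  define u where "u = - e'"
  define vb where "vb = - b'"
  have u0: "0 \<le> u" unfolding u_def e'_def using EB Rlb by simp
  have u1: "u \<le> 655/1000"
  proof -
    have "e^2 \<le> (106/1000)^2" using EB e106 by (intro power_mono) auto
    hence num: "e^2 + 10 * e + 4 * w \<le> 6178836/1000000" using e106 EB by (simp add: power2_eq_square)
    have "e^2 + 10 * e + 4 * w \<le> 655/1000 * (2 * R)" using num Rlb by simp
    thus ?thesis unfolding u_def e'_def using Rlb by (simp add: pos_divide_le_eq)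
  qed
  have vb: "4 \<le> vb" unfolding vb_def b'_def using bfun_props(4)[of yt] yt c10 by simp
  have SC: "0 \<le> bp * vb * N - u * ((2+e+ep)*(1+ep)*(ec-ed) + 2*(\<delta>+2)*(2+e+ep) + (2+ec+ed+\<delta>*(1+ec))*(\<delta>+2+2*bfun yt*bp))"
    unfolding N_def using sign_core[OF dl EB(3) e106 ep ec ed bt bp u0 u1 vb] by simp
  have Z: "0 \<le> Np * Den - N * Dn / 2"
  proof -
    have "Np * Den - N * Dn / 2 = Np * Den - N * ((2+e+ep)*e' + \<delta>*bp*b')" unfolding Dn_def by (simp add: algebra_simps)
    also have "\<dots> = \<delta> * (bp * vb * N - u * ((2+e+ep)*(1+ep)*(ec-ed) + 2*(\<delta>+2)*(2+e+ep) + (2+ec+ed+\<delta>*(1+ec))*(\<delta>+2+2*bfun yt*bp)))"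
      unfolding Np_def Den_def N_def u_def vb_def using Zid[of e' ec ed \<delta> e ep "bfun yt" bp b'] by (simp add: mult.assoc)
    also have "\<dots> \<ge> 0" using SC dl by simp
    finally show ?thesis .
  qed
  have D0: "0 \<le> (Np * (r * K) - N * (Dn / (2 * r) * K)) / (r * K)^2"
    by (rule Dsign[OF rp rr Kp Z])
  have FDw: "(F has_real_derivative (Np * (r * K) - N * (Dn / (2 * r) * K)) / (r * K)^2) (at yt within {cc 10..<1})"
    using FD' by (rule has_field_derivative_at_within)
  have "((\<lambda>x. Gs \<delta> (eta \<xi> x) ep ec ed (beta x) bp bc bd) has_real_derivative (Np * (r * K) - N * (Dn / (2 * r) * K)) / (r * K)^2) (at yt within {cc 10..<1})"
    by (rule has_field_derivative_transform_within[OF FDw zero_less_one]) (use yt eqF in auto)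
  thus ?thesis using D0 unfolding ep_def ec_def ed_def bp_def bc_def bd_def by blast
qed


theorem lemma4p3:
  fixes \<xi> :: real and y :: "nat \<Rightarrow> real" and j :: nat and \<delta> :: real
  assumes "0 \<le> \<xi>" and "\<xi> \<le> 0.13"
    and "\<forall>i\<in>{2,3,5,6}. cc 9 \<le> y i \<and> y i < 1"
    and "j \<in> {2,3,5,6}"
    and "y (pairing j) \<le> y j" and "cc 10 \<le> y j"
    and "0 \<le> \<delta>" and "\<delta> \<le> 0.13"
  shows "\<exists>D. ((\<lambda>t. psi_v \<xi> \<delta> (y(j := t))) has_real_derivative D)
               (at (y j) within {cc 10..<1}) \<and> 0 \<le> D"
proof -
  have xi: "0 \<le> \<xi>" "\<xi> \<le> 13/100" using assms(1,2) by simp_all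
  have dl: "0 \<le> \<delta>" "\<delta> \<le> 13/100" using assms(7,8) by simp_all
  have Y: "cc 9 \<le> y 2" "y 2 < 1" "cc 9 \<le> y 3" "y 3 < 1" "cc 9 \<le> y 5" "y 5 < 1" "cc 9 \<le> y 6" "y 6 < 1"
    using assms(3) by auto
  from assms(4) consider "j = 2" | "j = 3" | "j = 5" | "j = 6" by auto
  then show ?thesis
  proof cases
    case 1
    have f: "(\<lambda>t. psi_v \<xi> \<delta> (y(j := t))) = (\<lambda>x. Gs \<delta> (eta \<xi> x) (eta \<xi> (y 6)) (eta \<xi> (y 5)) (eta \<xi> (y 3)) (beta x) (beta (y 6)) (beta (y 5)) (beta (y 3)))"
      using 1 by (simp add: psi_v_def psi_def G_Gs(1))
    show ?thesis unfolding f using core[OF xi dl, of "y 2" "y 6" "y 5" "y 3"] assms(5,6) Y 1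
      by (simp add: pairing_def)
  next
    case 2
    have f: "(\<lambda>t. psi_v \<xi> \<delta> (y(j := t))) = (\<lambda>x. Gs \<delta> (eta \<xi> x) (eta \<xi> (y 5)) (eta \<xi> (y 6)) (eta \<xi> (y 2)) (beta x) (beta (y 5)) (beta (y 6)) (beta (y 2)))"
      using 2 by (simp add: psi_v_def psi_def G_Gs(3))
    show ?thesis unfolding f using core[OF xi dl, of "y 3" "y 5" "y 6" "y 2"] assms(5,6) Y 2
      by (simp add: pairing_def)
  next
    case 3
    have f: "(\<lambda>t. psi_v \<xi> \<delta> (y(j := t))) = (\<lambda>x. Gs \<delta> (eta \<xi> x) (eta \<xi> (y 3)) (eta \<xi> (y 2)) (eta \<xi> (y 6)) (beta x) (beta (y 3)) (beta (y 2)) (beta (y 6)))"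
      using 3 by (simp add: psi_v_def psi_def G_Gs(4))
    show ?thesis unfolding f using core[OF xi dl, of "y 5" "y 3" "y 2" "y 6"] assms(5,6) Y 3
      by (simp add: pairing_def)
  next
    case 4
    have f: "(\<lambda>t. psi_v \<xi> \<delta> (y(j := t))) = (\<lambda>x. Gs \<delta> (eta \<xi> x) (eta \<xi> (y 2)) (eta \<xi> (y 3)) (eta \<xi> (y 5)) (beta x) (beta (y 2)) (beta (y 3)) (beta (y 5)))"
      using 4 by (simp add: psi_v_def psi_def G_Gs(2))
    show ?thesis unfolding f using core[OF xi dl, of "y 6" "y 2" "y 3" "y 5"] assms(5,6) Y 4
      by (simp add: pairing_def)
  qed
qed

end
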